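(* Let $r\ge 4$, $H\in(0,1)$, $\tau>0$, and let $X=X^*_{\tau(1-H)}$. Then $X$ is $r$-robust, and for every $\eta\in[0,H]$: if $T=\tau(1+\eta)$ then $T/\ell(X,T)\le\min\{c_r(1+\eta)/(1-H),\,r\}$, and if $T=\tau(1-\eta)$ then $T/\ell(X,T)\le\min\{c_r(1-\eta)/(1-H),\,r\}$. In particular $T/\ell(X,T)\le \min\{c_r(1+H)/(1-H),\,r\}$ for every $T\in[\tau(1-H),\tau(1+H)]$.
   Context: A schedule is an increasing sequence $X=(x_i)_{i\ge1}$ of positive reals (contract lengths), with completion times $S_i=\sum_{j=1}^i x_j$. For $T>0$, $\ell(X,T)=\max\{x_i: S_i\le T\}$ ($0$ if none). The robustness of $X$ is $\sup_{i\ge2}S_i/x_{i-1}$; $X$ is $r$-robust if this is at most $r$. For $r\ge4$ let $c_r=\frac{r-\sqrt{r^2-4r}}{2}$ and $b_r=\frac{r+\sqrt{r^2-4r}}{2}$. For $\sigma>0$, $X^*_\sigma$ denotes the schedule $(\gamma b_r^i)_{i\ge1}$ where $\gamma>0$ is chosen so that $\sum_{i=1}^m\gamma b_r^i=\sigma$ for some integer $m\ge1$. The prediction is $\tau$, the interruption is $T$, and the error $\eta$ is defined by $T=\tau(1+\eta)$ if $T\ge\tau$ and $T=\tau(1-\eta)$ if $T\le \tau$; it is assumed that $\eta\le H$ with $H$ known to the schedule. *)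

theory Defs
  imports Complex_Main
begin

text \<open>A schedule is a sequence x indexed by positive integers i = 1, 2, ...
  (the value x 0 is irrelevant). Completion times S_i = x_1 + ... + x_i.\<close>

definition is_schedule :: "(nat \<Rightarrow> real) \<Rightarrow> bool" where
  "is_schedule x \<longleftrightarrow> (\<forall>i\<ge>1. 0 < x i \<and> x i < x (Suc i))"

definition compl :: "(nat \<Rightarrow> real) \<Rightarrow> nat \<Rightarrow> real" where
  "compl x i = (\<Sum>j=1..i. x j)"

definition ell :: "(nat \<Rightarrow> real) \<Rightarrow> real \<Rightarrow> real" where
  "ell x T = (if \<exists>i\<ge>1. compl x i \<le> T
              then Max {x i | i. 1 \<le> i \<and> compl x i \<le> T} else 0)"

definition robust :: "real \<Rightarrow> (nat \<Rightarrow> real) \<Rightarrow> bool" where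
  "robust r x \<longleftrightarrow> (\<forall>i\<ge>2. compl x i / x (i - 1) \<le> r)"

definition c_r :: "real \<Rightarrow> real" where
  "c_r r = (r - sqrt (r^2 - 4*r)) / 2"

definition b_r :: "real \<Rightarrow> real" where
  "b_r r = (r + sqrt (r^2 - 4*r)) / 2"

definition is_Xstar :: "real \<Rightarrow> real \<Rightarrow> (nat \<Rightarrow> real) \<Rightarrow> bool" where
  "is_Xstar r \<sigma> x \<longleftrightarrow> (\<exists>\<gamma>>0. \<exists>m\<ge>1. x = (\<lambda>i. \<gamma> * b_r r ^ i) \<and>
                              (\<Sum>i=1..m. \<gamma> * b_r r ^ i) = \<sigma>)"

end

theory Submission
  imports Defs
begin

lemma b_facts:
  assumes "r \<ge> 4"
  shows "b_r r \<ge> 2" "(b_r r)^2 = r * (b_r r - 1)" "c_r r = b_r r / (b_r r - 1)"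
proof -
  define s where "s = sqrt (r^2 - 4*r)"
  have h4: "4*r \<le> r^2" using assms mult_right_mono[of 4 r r] by (simp add: power2_eq_square)
  have s0: "s \<ge> 0" unfolding s_def using h4 by simp
  note h4
  then have ss: "s^2 = r^2 - 4*r" unfolding s_def by simp
  have bd: "b_r r = (r + s)/2" "c_r r = (r - s)/2" unfolding b_r_def c_r_def s_def by auto
  show b2: "b_r r \<ge> 2" using bd s0 assms by simp
  show q: "(b_r r)^2 = r * (b_r r - 1)" unfolding bd using ss
    by (simp add: power2_eq_square field_simps)
  have "c_r r = r - b_r r" using bd by simp
  also have "\<dots> = b_r r / (b_r r - 1)" using b2 q
    by (simp add: field_simps power2_eq_square)
  finally show "c_r r = b_r r / (b_r r - 1)" .
qed

lemma compl_geo: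
  fixes b \<gamma> :: real
  shows "(b - 1) * compl (\<lambda>i. \<gamma> * b ^ i) n = \<gamma> * (b ^ (n+1) - b)"
proof (induction n)
  case 0 then show ?case by (simp add: compl_def)
next
  case (Suc n)
  have "compl (\<lambda>i. \<gamma> * b ^ i) (Suc n) = compl (\<lambda>i. \<gamma> * b ^ i) n + \<gamma> * b ^ Suc n"
    by (simp add: compl_def)
  then show ?case using Suc by (simp add: algebra_simps)
qed

lemma main:
  fixes r \<gamma> \<sigma> T :: real and m :: nat
  assumes r: "r \<ge> 4" and g: "\<gamma> > 0" and m: "m \<ge> 1"
    and x: "x = (\<lambda>i. \<gamma> * b_r r ^ i)" and sig: "compl x m = \<sigma>" and T: "\<sigma> \<le> T"
  shows "robust r x \<and> T / ell x T \<le> min (c_r r * T / \<sigma>) r"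
proof -
  define b where "b = b_r r"
  have b2: "b \<ge> 2" and q: "b^2 = r*(b-1)" and c: "c_r r = b/(b-1)"
    using b_facts[OF r] by (auto simp: b_def)
  have cg: "compl x n = \<gamma> * (b ^ (n+1) - b) / (b - 1)" for n
    using compl_geo[of b \<gamma> n] b2 unfolding x b_def by (simp add: field_simps)
  have rob: "robust r x"
    unfolding robust_def
  proof (intro allI impI)
    fix i :: nat assume "i \<ge> 2"
    define j where "j = i - 1"
    have i: "i = j + 1" using \<open>i \<ge> 2\<close> unfolding j_def by simp
    have xp: "x j > 0" using g b2 unfolding x b_def by simp
    have "compl x i \<le> \<gamma> * b^(j+2) / (b-1)" unfolding cg i using b2 g
      by (simp add: divide_right_mono)
    also have "\<dots> = r * x j"
    proof -
      have e: "b^(j+2) = b^2 * b^j" by (simp add: power_add mult.commute power2_eq_square)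
      have f: "b^2 / (b-1) = r" using q b2 by (simp add: field_simps)
      have "\<gamma> * b^(j+2) / (b-1) = (\<gamma> * b^j) * (b^2 / (b-1))" unfolding e by simp
      also have "\<dots> = r * (\<gamma> * b^j)" using f by simp
      finally show ?thesis unfolding x b_def by simp
    qed
    finally show "compl x i / x (i - 1) \<le> r" using xp i by (simp add: divide_le_eq)
  qed
  have xpos: "\<And>i. x i > 0" using g b2 unfolding x b_def by simp
  have xmono: "\<And>i j. i \<le> j \<Longrightarrow> x i \<le> x j" using g b2 unfolding x b_def
    by (simp add: power_increasing)
  have cmono: "\<And>i j. i \<le> j \<Longrightarrow> compl x i \<le> compl x j"
    unfolding compl_def using xpos
    by (intro sum_mono2) (auto simp: less_imp_le)
  have clow: "compl x i \<ge> real i * (\<gamma> * b)" for i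
  proof -
    have "(\<Sum>j=1..i. \<gamma> * b) \<le> (\<Sum>j=1..i. x j)"
    proof (rule sum_mono)
      fix j assume "j \<in> {1..i}"
      then have "b^1 \<le> b^j" using b2 by (intro power_increasing) auto
      then show "\<gamma> * b \<le> x j" using g unfolding x b_def[symmetric] by simp
    qed
    then show ?thesis by (simp add: compl_def)
  qed
  define K where "K = {i. 1 \<le> i \<and> compl x i \<le> T}"
  define N where "N = nat \<lceil>T / (\<gamma> * b)\<rceil>"
  have KN: "K \<subseteq> {..N}"
  proof
    fix i assume "i \<in> K"
    then have "real i * (\<gamma> * b) \<le> T" using clow[of i] unfolding K_def by auto
    then have "real i \<le> T / (\<gamma> * b)" using g b2 by (simp add: le_divide_eq)
    then have "\<lceil>real i\<rceil> \<le> \<lceil>T / (\<gamma> * b)\<rceil>" by (rule ceiling_mono)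
    then have ci: "int i \<le> \<lceil>T / (\<gamma> * b)\<rceil>" by simp
    then have "0 \<le> \<lceil>T / (\<gamma> * b)\<rceil>" by linarith
    then show "i \<in> {..N}" unfolding N_def using ci by (simp add: le_nat_iff)
  qed
  have fK: "finite K" using KN finite_subset by blast
  have mK: "m \<in> K" using m sig T unfolding K_def by auto
  define k where "k = Max K"
  have kK: "k \<in> K" using fK mK unfolding k_def by (auto intro: Max_in)
  have mk: "m \<le> k" using fK mK unfolding k_def by auto
  have k1: "k + 1 \<notin> K"
  proof
    assume "k + 1 \<in> K"
    then have "k + 1 \<le> Max K" by (rule Max_ge[OF fK])
    then show False unfolding k_def by simp
  qed
  have k1T: "compl x (k+1) > T" using k1 unfolding K_def by auto
  have ex: "\<exists>i\<ge>1. compl x i \<le> T" using kK unfolding K_def by auto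
  have setK: "{x i | i. 1 \<le> i \<and> compl x i \<le> T} = x ` K" unfolding K_def by auto
  have "Max (x ` K) = x k"
  proof (rule Max_eqI)
    show "finite (x ` K)" using fK by simp
    show "y \<le> x k" if "y \<in> x ` K" for y
      using that fK xmono unfolding k_def by auto
    show "x k \<in> x ` K" using kK by simp
  qed
  then have ellk: "ell x T = x k" unfolding ell_def using ex setK by simp
  have sigpos: "\<sigma> > 0" using sig cmono[of 1 m] m xpos by (simp add: compl_def) (smt (verit) xpos)
  have Tpos: "T > 0" using sigpos T by simp
  have b1: "T / x k \<le> r"
  proof -
    have k2: "k + 1 \<ge> 2" using mk m by simp
    have "compl x (k+1) / x (k + 1 - 1) \<le> r" using rob k2 unfolding robust_def by blast
    then have "compl x (k+1) / x k \<le> r" by simp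
    then show ?thesis using k1T xpos[of k] by (smt (verit) divide_right_mono)
  qed
  have sm: "\<sigma> \<le> c_r r * x m"
  proof -
    have "(b-1) * \<sigma> = \<gamma> * (b ^ (m+1) - b)" using compl_geo[of b \<gamma> m] sig unfolding x b_def by simp
    also have "\<dots> \<le> b * x m" using g b2 unfolding x b_def[symmetric] by (simp add: algebra_simps)
    finally show ?thesis unfolding c using b2 by (simp add: field_simps mult.commute)
  qed
  have b2': "T / x k \<le> c_r r * T / \<sigma>"
  proof -
    have "T / x k \<le> T / x m" using xmono[OF mk] xpos Tpos by (simp add: frac_le)
    also have "\<dots> \<le> c_r r * T / \<sigma>" using sm sigpos Tpos xpos[of m]
      by (simp add: field_simps mult_left_mono mult.commute)
    finally show ?thesis .
  qed
  show ?thesis using rob b1 b2' ellk by simp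
qed

theorem lemma2:
  fixes r H \<tau> :: real and x :: "nat \<Rightarrow> real"
  assumes "r \<ge> 4" and "0 < H" and "H < 1" and "\<tau> > 0"
    and "is_Xstar r (\<tau> * (1 - H)) x"
  shows "robust r x
    \<and> (\<forall>\<eta>. 0 \<le> \<eta> \<and> \<eta> \<le> H \<longrightarrow>
          (\<tau> * (1 + \<eta>)) / ell x (\<tau> * (1 + \<eta>)) \<le> min (c_r r * (1 + \<eta>) / (1 - H)) r
        \<and> (\<tau> * (1 - \<eta>)) / ell x (\<tau> * (1 - \<eta>)) \<le> min (c_r r * (1 - \<eta>) / (1 - H)) r)
    \<and> (\<forall>T. \<tau> * (1 - H) \<le> T \<and> T \<le> \<tau> * (1 + H) \<longrightarrow>
          T / ell x T \<le> min (c_r r * (1 + H) / (1 - H)) r)"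
proof -
  obtain \<gamma> m where g: "\<gamma> > 0" and m: "m \<ge> 1" and x: "x = (\<lambda>i. \<gamma> * b_r r ^ i)"
    and s: "(\<Sum>i=1..m. \<gamma> * b_r r ^ i) = \<tau> * (1 - H)"
    using assms(5) unfolding is_Xstar_def by blast
  define \<sigma> where "\<sigma> = \<tau> * (1 - H)"
  have sig: "compl x m = \<sigma>" using s unfolding compl_def x \<sigma>_def by simp
  have M: "\<And>T. \<sigma> \<le> T \<Longrightarrow> robust r x \<and> T / ell x T \<le> min (c_r r * T / \<sigma>) r"
    using main[OF assms(1) g m x sig] by blast
  have cpos: "c_r r \<ge> 0" using b_facts[OF assms(1)] by simp
  have sp: "\<sigma> > 0" using assms unfolding \<sigma>_def by simp
  have rt: "c_r r * (\<tau> * a) / \<sigma> = c_r r * a / (1 - H)" for a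
    using assms unfolding \<sigma>_def by (simp add: field_simps)
  have rob: "robust r x" using M[of \<sigma>] by simp
  have P1: "(\<tau> * (1 + \<eta>)) / ell x (\<tau> * (1 + \<eta>)) \<le> min (c_r r * (1 + \<eta>) / (1 - H)) r
        \<and> (\<tau> * (1 - \<eta>)) / ell x (\<tau> * (1 - \<eta>)) \<le> min (c_r r * (1 - \<eta>) / (1 - H)) r"
    if "0 \<le> \<eta>" "\<eta> \<le> H" for \<eta>
  proof -
    have a: "\<sigma> \<le> \<tau> * (1 + \<eta>)" "\<sigma> \<le> \<tau> * (1 - \<eta>)" using that assms unfolding \<sigma>_def
      by (auto simp: mult_left_mono)
    show ?thesis using M[OF a(1)] M[OF a(2)] rt[of "1+\<eta>"] rt[of "1-\<eta>"] by simp
  qed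
  have P2: "T / ell x T \<le> min (c_r r * (1 + H) / (1 - H)) r"
    if "\<tau> * (1 - H) \<le> T" "T \<le> \<tau> * (1 + H)" for T
  proof -
    have "\<sigma> \<le> T" using that unfolding \<sigma>_def by simp
    then have h: "T / ell x T \<le> min (c_r r * T / \<sigma>) r" using M by blast
    have "c_r r * T / \<sigma> \<le> c_r r * (\<tau> * (1 + H)) / \<sigma>"
      using that(2) cpos sp by (simp add: divide_right_mono mult_left_mono)
    then show ?thesis using h rt[of "1+H"] by linarith
  qed
  show ?thesis using rob P1 P2 by blast
qed

end
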